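(* Consider a single end device (node) in the time-slotted uplink system described in the context, with status-update arrival rate $\lambda\in(0,1]$, and put $\gamma=1-\lambda$. Let $k,m$ be positive integers. Suppose that in slot $t$ the node is scheduled and its transmission succeeds, so that the access point (AP) observes the local age $d_t=k$, and suppose that the AP does not successfully receive any packet from this node in any of the slots $t+1,\dots,t+m-1$. Then the destination AoI of the node satisfies $D_{t+m}=k+m$, and the conditional distribution of the local age $d_{t+m}$ given the AP's history of actions and observations (through slot $t+m-1$) is the vector $\bm{c}(k,m)=[c_{k,m}(d)]_{d=1,2,\dots}$ given by $$\bm{c}(k,m)=\left[\lambda,\lambda\gamma,\lambda\gamma^2,\dots,\lambda\gamma^{m-1},0,\dots,0,\gamma^m,0,\dots\right],$$ i.e. $c_{k,m}(d)=\lambda\gamma^{d-1}$ for $1\le d\le m$, $c_{k,m}(k+m)=\gamma^m$, and $c_{k,m}(d)=0$ for all other $d\ge 1$.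
   Context: System model: time is slotted, $t=0,1,2,\dots$. A node receives a new status update in each slot independently with probability $\lambda$ (Bernoulli arrivals) and keeps only the latest one. Its local age $d_t$ (system time of the latest update at the node) evolves as $d_{t+1}=1$ if an update arrives in slot $t$ and $d_{t+1}=d_t+1$ otherwise. In each slot the AP either schedules the node or not; if scheduled, the transmission succeeds with some probability $p\in(0,1]$ independently of everything else. If the node is scheduled and the transmission succeeds in slot $t$, the AP observes $d_t$ and the destination AoI becomes $D_{t+1}=d_t+1$; otherwise the AP observes nothing about $d_t$ and $D_{t+1}=D_t+1$. The AP's scheduling decisions may depend on its past actions and observations, but the AP never observes the arrivals directly. *)

theory Defs
  imports "HOL-Probability.Probability_Mass_Function"
begin

text \<open>The AP's history: for every past slot, the scheduling action (True = scheduled)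
and the observation (Some d = successful reception revealing the local age d,
None = nothing observed).\<close>
type_synonym ap_hist = "(bool \<times> nat option) list"

text \<open>System state at the beginning of a slot: (local age d, destination AoI D, AP history).\<close>
type_synonym sys_state = "nat \<times> nat \<times> ap_hist"

text \<open>The (possibly randomized) policy pol maps the AP's history to
the probability of scheduling the node; the transmission succeeds with probability p,
an update arrives with probability lam; all draws are independent.\<close>
definition slot_step :: "(ap_hist \<Rightarrow> real) \<Rightarrow> real \<Rightarrow> real \<Rightarrow> sys_state \<Rightarrow> sys_state pmf" where
  "slot_step pol lam p st =
     (case st of (d, D, h) \<Rightarrow>
       bind_pmf (bernoulli_pmf (pol h)) (\<lambda>a.
       bind_pmf (bernoulli_pmf p) (\<lambda>s.
       bind_pmf (bernoulli_pmf lam) (\<lambda>arr.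
         return_pmf ((if arr then 1 else d + 1),
                     (if a \<and> s then d + 1 else D + 1),
                     h @ [(a, if a \<and> s then Some d else None)])))))"

primrec sys_dist :: "(ap_hist \<Rightarrow> real) \<Rightarrow> real \<Rightarrow> real \<Rightarrow> (nat \<times> nat) pmf \<Rightarrow> nat \<Rightarrow> sys_state pmf" where
  "sys_dist pol lam p init 0 = map_pmf (\<lambda>(d, D). (d, D, [])) init"
| "sys_dist pol lam p init (Suc n) = bind_pmf (sys_dist pol lam p init n) (slot_step pol lam p)"

definition c_vec :: "real \<Rightarrow> nat \<Rightarrow> nat \<Rightarrow> nat \<Rightarrow> real" where
  "c_vec lam k m d =
     (if 1 \<le> d \<and> d \<le> m then lam * (1 - lam) ^ (d - 1)
      else if d = k + m then (1 - lam) ^ m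
      else 0)"

end

theory Submission
  imports Defs
begin

lemma nn_bern:
  assumes "0 \<le> q" "q \<le> 1"
  shows "(\<integral>\<^sup>+x. f x \<partial>measure_pmf (bernoulli_pmf q)) = ennreal q * f True + ennreal (1 - q) * f False"
  using assms by (simp add: nn_integral_measure_pmf nn_integral_count_space_finite UNIV_bool add.commute)

definition stepd :: "real \<Rightarrow> nat \<Rightarrow> nat pmf" where
  "stepd lam d = map_pmf (\<lambda>arr. if arr then 1 else d + 1) (bernoulli_pmf lam)"

primrec Cd :: "real \<Rightarrow> nat \<Rightarrow> nat \<Rightarrow> nat pmf" where
  "Cd lam k 0 = return_pmf k"
| "Cd lam k (Suc r) = bind_pmf (Cd lam k r) (stepd lam)"

lemma nn_slot:
  assumes "0 \<le> pol h" "pol h \<le> 1" "0 \<le> lam" "lam \<le> 1" "0 \<le> p" "p \<le> 1"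
  shows "(\<integral>\<^sup>+y. F y \<partial>measure_pmf (slot_step pol lam p (d, D, h))) =
     ennreal (pol h) * (ennreal p * (\<integral>\<^sup>+d'. F (d', d+1, h @ [(True, Some d)]) \<partial>stepd lam d)
                      + ennreal (1-p) * (\<integral>\<^sup>+d'. F (d', D+1, h @ [(True, None)]) \<partial>stepd lam d))
   + ennreal (1 - pol h) * (\<integral>\<^sup>+d'. F (d', D+1, h @ [(False, None)]) \<partial>stepd lam d)"
proof -
  have e: "ennreal p * X + ennreal (1-p) * X = X" for X
    using assms by (simp add: distrib_right[symmetric] ennreal_plus[symmetric] del: ennreal_plus)
  show ?thesis
    using assms unfolding slot_step_def stepd_def
    apply (simp add: nn_bern mult.commute)
    apply (subst e) apply simp done
qed

lemma len_hist:
  "x \<in> set_pmf (sys_dist pol lam p init n) \<Longrightarrow> length (snd (snd x)) = n"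
proof (induction n arbitrary: x)
  case 0
  then show ?case by auto
next
  case (Suc n)
  then show ?case
    by (auto simp: slot_step_def split: prod.splits)
qed

definition GG :: "(ap_hist \<Rightarrow> real) \<Rightarrow> real \<Rightarrow> real \<Rightarrow> (nat \<times> nat) pmf \<Rightarrow> ap_hist \<Rightarrow> nat \<Rightarrow> (nat \<Rightarrow> nat \<Rightarrow> ennreal) \<Rightarrow> ennreal" where
  "GG pol lam p init h n g = (\<integral>\<^sup>+x. (if snd (snd x) = take n h then g (fst x) (fst (snd x)) else 0) \<partial>measure_pmf (sys_dist pol lam p init n))"

lemma step_none:
  assumes pol_prob: "\<And>g. 0 \<le> pol g \<and> pol g \<le> 1"
    and lam: "0 \<le> lam" "lam \<le> 1" and p: "0 \<le> p" "p \<le> 1"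
    and n: "n < length h" and hn: "h ! n = (a, None)"
  shows "GG pol lam p init h (Suc n) g =
     ennreal (if a then pol (take n h) * (1 - p) else 1 - pol (take n h)) *
     GG pol lam p init h n (\<lambda>d D. \<integral>\<^sup>+d'. g d' (D+1) \<partial>stepd lam d)"
proof -
  define wa where "wa = ennreal (if a then pol (take n h) * (1 - p) else 1 - pol (take n h))"
  have tk: "take (Suc n) h = take n h @ [(a, None)]"
    using n hn by (simp add: take_Suc_conv_app_nth)
  have "GG pol lam p init h (Suc n) g =
    (\<integral>\<^sup>+x. (\<integral>\<^sup>+y. (if snd (snd y) = take (Suc n) h then g (fst y) (fst (snd y)) else 0) \<partial>measure_pmf (slot_step pol lam p x)) \<partial>measure_pmf (sys_dist pol lam p init n))"
    by (simp add: GG_def)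
  also have "\<dots> = (\<integral>\<^sup>+x. wa * (if snd (snd x) = take n h then (\<integral>\<^sup>+d'. g d' (fst (snd x)+1) \<partial>stepd lam (fst x)) else 0) \<partial>measure_pmf (sys_dist pol lam p init n))"
  proof (rule nn_integral_cong_AE, unfold AE_measure_pmf_iff, intro ballI)
    fix x assume x: "x \<in> set_pmf (sys_dist pol lam p init n)"
    obtain d D h' where xe: "x = (d, D, h')" by (cases x) auto
    have lh: "length h' = n" using len_hist[OF x] xe by simp
    have pp: "0 \<le> pol h'" "pol h' \<le> 1" using pol_prob by auto
    show "(\<integral>\<^sup>+y. (if snd (snd y) = take (Suc n) h then g (fst y) (fst (snd y)) else 0) \<partial>measure_pmf (slot_step pol lam p x)) =
         wa * (if snd (snd x) = take n h then (\<integral>\<^sup>+d'. g d' (fst (snd x)+1) \<partial>stepd lam (fst x)) else 0)"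
      unfolding xe tk using lh pp lam p
      by (cases a) (auto simp: nn_slot wa_def ennreal_mult mult.assoc)
  qed
  also have "\<dots> = wa * GG pol lam p init h n (\<lambda>d D. \<integral>\<^sup>+d'. g d' (D+1) \<partial>stepd lam d)"
    unfolding GG_def by (simp add: nn_integral_cmult)
  finally show ?thesis unfolding wa_def .
qed


lemma step_obs:
  assumes pol_prob: "\<And>g. 0 \<le> pol g \<and> pol g \<le> 1"
    and lam: "0 \<le> lam" "lam \<le> 1" and p: "0 \<le> p" "p \<le> 1"
    and n: "n < length h" and hn: "h ! n = (True, Some k)"
  shows "GG pol lam p init h (Suc n) g =
     ennreal (pol (take n h) * p) * GG pol lam p init h n (\<lambda>d D. if d = k then 1 else 0) *
     (\<integral>\<^sup>+d'. g d' (k+1) \<partial>stepd lam k)"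
proof -
  define wa where "wa = ennreal (pol (take n h) * p)"
  have tk: "take (Suc n) h = take n h @ [(True, Some k)]"
    using n hn by (simp add: take_Suc_conv_app_nth)
  have "GG pol lam p init h (Suc n) g =
    (\<integral>\<^sup>+x. (\<integral>\<^sup>+y. (if snd (snd y) = take (Suc n) h then g (fst y) (fst (snd y)) else 0) \<partial>measure_pmf (slot_step pol lam p x)) \<partial>measure_pmf (sys_dist pol lam p init n))"
    by (simp add: GG_def)
  also have "\<dots> = (\<integral>\<^sup>+x. wa * (if snd (snd x) = take n h then (if fst x = k then 1 else 0) else 0) * (\<integral>\<^sup>+d'. g d' (k+1) \<partial>stepd lam k) \<partial>measure_pmf (sys_dist pol lam p init n))"
  proof (rule nn_integral_cong_AE, unfold AE_measure_pmf_iff, intro ballI)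
    fix x assume x: "x \<in> set_pmf (sys_dist pol lam p init n)"
    obtain d D h' where xe: "x = (d, D, h')" by (cases x) auto
    have lh: "length h' = n" using len_hist[OF x] xe by simp
    have pp: "0 \<le> pol h'" "pol h' \<le> 1" using pol_prob by auto
    show "(\<integral>\<^sup>+y. (if snd (snd y) = take (Suc n) h then g (fst y) (fst (snd y)) else 0) \<partial>measure_pmf (slot_step pol lam p x)) =
         wa * (if snd (snd x) = take n h then (if fst x = k then 1 else 0) else 0) * (\<integral>\<^sup>+d'. g d' (k+1) \<partial>stepd lam k)"
      unfolding xe tk using lh pp lam p
      by (auto simp: nn_slot wa_def ennreal_mult mult.assoc)
  qed
  also have "\<dots> = wa * GG pol lam p init h n (\<lambda>d D. if d = k then 1 else 0) * (\<integral>\<^sup>+d'. g d' (k+1) \<partial>stepd lam k)"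
    unfolding GG_def by (simp add: nn_integral_cmult nn_integral_multc)
  finally show ?thesis unfolding wa_def .
qed

lemma invariant:
  assumes pol_prob: "\<And>g. 0 \<le> pol g \<and> pol g \<le> 1"
    and lam: "0 \<le> lam" "lam \<le> 1" and p: "0 \<le> p" "p \<le> 1"
    and len: "length h = t + m"
    and obs_t: "h ! t = (True, Some k)"
    and no_rx: "\<And>j. t + 1 \<le> j \<Longrightarrow> j < t + m \<Longrightarrow> snd (h ! j) = None"
    and r: "1 \<le> r" "r \<le> m"
  shows "\<exists>W. \<forall>g. GG pol lam p init h (t + r) g = W * (\<integral>\<^sup>+d. g d (k + r) \<partial>Cd lam k r)"
  using r
proof (induction r)
  case 0
  then show ?case by simp
next
  case (Suc r)
  show ?case
  proof (cases "r = 0")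
    case True
    have "t < length h" using len Suc by simp
    from step_obs[where pol=pol and lam=lam and p=p and init=init, OF pol_prob lam p this obs_t]
    show ?thesis using True by (auto simp: bind_return_pmf)
  next
    case False
    then obtain W where W: "\<And>g. GG pol lam p init h (t + r) g = W * (\<integral>\<^sup>+d. g d (k + r) \<partial>Cd lam k r)"
      using Suc by auto
    have lt: "t + r < length h" using len Suc by simp
    have "snd (h ! (t + r)) = None" using no_rx[of "t + r"] False Suc by simp
    then have hn: "h ! (t + r) = (fst (h ! (t + r)), None)" by (metis prod.collapse)
    define wa where "wa = ennreal (if fst (h ! (t + r)) then pol (take (t + r) h) * (1 - p) else 1 - pol (take (t + r) h))"
    have "GG pol lam p init h (t + Suc r) g = (wa * W) * (\<integral>\<^sup>+d. g d (k + Suc r) \<partial>Cd lam k (Suc r))" for g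
      using step_none[where pol=pol and lam=lam and p=p and init=init and g=g, OF pol_prob lam p lt hn] W[of "\<lambda>d D. \<integral>\<^sup>+d'. g d' (D+1) \<partial>stepd lam d"]
      by (simp add: wa_def mult.assoc)
    then show ?thesis by blast
  qed
qed


lemma pmf_Cd_Suc:
  assumes "0 \<le> lam" "lam \<le> 1"
  shows "pmf (Cd lam k (Suc r)) x = (if x = 1 then lam else 0) + (1 - lam) * (if x = 0 then 0 else pmf (Cd lam k r) (x - 1))"
proof -
  have "ennreal (pmf (Cd lam k (Suc r)) x) = emeasure (measure_pmf (Cd lam k (Suc r))) {x}"
    by (rule emeasure_pmf_single[symmetric])
  also have "\<dots> = (\<integral>\<^sup>+y. indicator {x} y \<partial>Cd lam k (Suc r))"
    by (rule nn_integral_indicator[symmetric]) simp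
  also have "\<dots> = (\<integral>\<^sup>+d. ennreal lam * indicator {x} (1::nat) + ennreal (1 - lam) * indicator {x} (Suc d) \<partial>Cd lam k r)"
    using assms by (simp add: stepd_def nn_bern mult.commute)
  also have "\<dots> = ennreal lam * indicator {x} (1::nat) + ennreal (1 - lam) * (\<integral>\<^sup>+d. indicator {x} (Suc d) \<partial>Cd lam k r)"
    by (simp add: nn_integral_add nn_integral_cmult)
  also have "(\<integral>\<^sup>+d. indicator {x} (Suc d) \<partial>Cd lam k r) = ennreal (if x = 0 then 0 else pmf (Cd lam k r) (x - 1))"
  proof (cases x)
    case 0
    then show ?thesis by simp
  next
    case (Suc y)
    have "(\<integral>\<^sup>+d. indicator {x} (Suc d) \<partial>Cd lam k r) = (\<integral>\<^sup>+d. indicator {y} d \<partial>Cd lam k r)"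
      by (rule nn_integral_cong) (simp add: Suc indicator_def)
    then show ?thesis using Suc by (simp add: emeasure_pmf_single)
  qed
  finally have "ennreal (pmf (Cd lam k (Suc r)) x) = ennreal ((if x = 1 then lam else 0) + (1 - lam) * (if x = 0 then 0 else pmf (Cd lam k r) (x - 1)))"
    using assms by (simp add: ennreal_plus[symmetric] ennreal_mult[symmetric] indicator_def del: ennreal_plus)
  then show ?thesis using assms by (subst (asm) ennreal_inj) auto
qed

lemma pmf_Cd:
  assumes "0 \<le> lam" "lam \<le> 1" "1 \<le> k"
  shows "pmf (Cd lam k m) x = c_vec lam k m x"
proof (induction m arbitrary: x)
  case 0
  then show ?case using assms by (simp add: c_vec_def)
next
  case (Suc r)
  note IH = Suc.IH
  have E: "pmf (Cd lam k (Suc r)) x = (if x = 1 then lam else 0) + (1 - lam) * (if x = 0 then 0 else pmf (Cd lam k r) (x - 1))"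
    by (rule pmf_Cd_Suc[OF assms(1,2)])
  show ?case
  proof (cases x)
    case 0
    then show ?thesis using assms unfolding E by (simp add: c_vec_def)
  next
    case (Suc y)
    then show ?thesis using assms IH[of y] unfolding E
      by (cases y) (auto simp add: c_vec_def)
  qed
qed

theorem proposition1:
  fixes pol :: "ap_hist \<Rightarrow> real" and lam p :: real and init :: "(nat \<times> nat) pmf"
    and t k m :: nat and h :: ap_hist
  assumes pol_prob: "\<And>g. 0 \<le> pol g \<and> pol g \<le> 1"
    and lam: "0 < lam" "lam \<le> 1"
    and p: "0 < p" "p \<le> 1"
    and km: "1 \<le> k" "1 \<le> m"
    and len: "length h = t + m"
    and obs_t: "h ! t = (True, Some k)"
    and no_rx: "\<And>j. t + 1 \<le> j \<Longrightarrow> j < t + m \<Longrightarrow> snd (h ! j) = None"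
    and pos: "measure_pmf.prob (sys_dist pol lam p init (t + m)) {x. snd (snd x) = h} > 0"
  shows "(\<forall>x \<in> set_pmf (sys_dist pol lam p init (t + m)).
            snd (snd x) = h \<longrightarrow> fst (snd x) = k + m)
       \<and> (\<forall>d \<ge> 1.
            measure_pmf.prob (sys_dist pol lam p init (t + m)) {x. fst x = d \<and> snd (snd x) = h}
            / measure_pmf.prob (sys_dist pol lam p init (t + m)) {x. snd (snd x) = h}
            = c_vec lam k m d)"
  proof -
  let ?M = "sys_dist pol lam p init (t + m)"
  have l0: "0 \<le> lam" "lam \<le> 1" "0 \<le> p" "p \<le> 1" using lam p by auto
  obtain W where W: "\<And>g. GG pol lam p init h (t + m) g = W * (\<integral>\<^sup>+d. g d (k + m) \<partial>Cd lam k m)"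
    using invariant[where pol=pol and lam=lam and p=p and init=init, OF pol_prob l0 len obs_t no_rx km(2) order_refl] by blast
  have tk: "take (t + m) h = h" using len by simp
  have part1: "\<forall>x \<in> set_pmf ?M. snd (snd x) = h \<longrightarrow> fst (snd x) = k + m"
  proof (intro ballI impI)
    fix x assume x: "x \<in> set_pmf ?M" and hx: "snd (snd x) = h"
    obtain d D where xe: "x = (d, D, h)" using hx by (cases x) auto
    show "fst (snd x) = k + m"
    proof (rule ccontr)
      assume ne: "fst (snd x) \<noteq> k + m"
      have "GG pol lam p init h (t + m) (\<lambda>d' D'. if d' = d \<and> D' = D then 1 else 0) = (\<integral>\<^sup>+y. indicator {x} y \<partial>?M)"
        unfolding GG_def tk by (rule nn_integral_cong) (auto simp: xe indicator_def)
      also have "\<dots> = ennreal (pmf ?M x)"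
        by (simp add: emeasure_pmf_single)
      finally have "ennreal (pmf ?M x) = W * (\<integral>\<^sup>+d'. (if d' = d \<and> k + m = D then 1 else 0) \<partial>Cd lam k m)"
        using W by simp
      also have "\<dots> = 0" using ne xe by simp
      finally have "pmf ?M x = 0" by simp
      with x show False by (simp add: set_pmf_iff)
    qed
  qed
  have GA: "GG pol lam p init h (t + m) (\<lambda>_ _. 1) = ennreal (measure_pmf.prob ?M {x. snd (snd x) = h})"
  proof -
    have "GG pol lam p init h (t + m) (\<lambda>_ _. 1) = (\<integral>\<^sup>+y. indicator {x. snd (snd x) = h} y \<partial>?M)"
      unfolding GG_def tk by (rule nn_integral_cong) (auto simp: indicator_def)
    then show ?thesis by (simp add: measure_pmf.emeasure_eq_measure)
  qed
  have WP: "W = ennreal (measure_pmf.prob ?M {x. snd (snd x) = h})"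
    using W[of "\<lambda>_ _. 1"] GA by simp
  have part2: "measure_pmf.prob ?M {x. fst x = d \<and> snd (snd x) = h} / measure_pmf.prob ?M {x. snd (snd x) = h}
      = c_vec lam k m d" for d
  proof -
    have "GG pol lam p init h (t + m) (\<lambda>d' _. if d' = d then 1 else 0) = (\<integral>\<^sup>+y. indicator {x. fst x = d \<and> snd (snd x) = h} y \<partial>?M)"
      unfolding GG_def tk by (rule nn_integral_cong) (auto simp: indicator_def)
    also have "\<dots> = ennreal (measure_pmf.prob ?M {x. fst x = d \<and> snd (snd x) = h})"
      by (simp add: measure_pmf.emeasure_eq_measure)
    finally have A: "ennreal (measure_pmf.prob ?M {x. fst x = d \<and> snd (snd x) = h}) =
        W * (\<integral>\<^sup>+d'. (if d' = d then 1 else 0) \<partial>Cd lam k m)"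
      using W[of "\<lambda>d' _. if d' = d then 1 else 0"] by simp
    also have "(\<integral>\<^sup>+d'. (if d' = d then 1 else 0) \<partial>Cd lam k m) = ennreal (pmf (Cd lam k m) d)"
    proof -
      have "(\<integral>\<^sup>+d'. (if d' = d then 1 else 0) \<partial>Cd lam k m) = (\<integral>\<^sup>+d'. indicator {d} d' \<partial>Cd lam k m)"
        by (rule nn_integral_cong) (simp add: indicator_def)
      then show ?thesis by (simp add: emeasure_pmf_single)
    qed
    also have "W * ennreal (pmf (Cd lam k m) d) = ennreal (measure_pmf.prob ?M {x. snd (snd x) = h} * c_vec lam k m d)"
    proof -
      have cn: "0 \<le> c_vec lam k m d" using pmf_Cd[OF l0(1,2) km(1), of m d] pmf_nonneg[of "Cd lam k m" d] by simp
      show ?thesis using pmf_Cd[OF l0(1,2) km(1)] WP cn by (simp add: ennreal_mult)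
    qed
    finally have "measure_pmf.prob ?M {x. fst x = d \<and> snd (snd x) = h} = measure_pmf.prob ?M {x. snd (snd x) = h} * c_vec lam k m d"
      by (subst (asm) ennreal_inj) (auto simp: pmf_Cd[OF l0(1,2) km(1), symmetric] intro: mult_nonneg_nonneg)
    then show ?thesis using pos by simp
  qed
  show ?thesis using part1 part2 by blast
qed

end
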